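(* Let $n\geq 3$ and let $g\in C^1(-1,1)$ be such that $(1-t^2)^{\frac{n-1}{2}}g'(t)$ is integrable on $(-1,1)$. Then $(1-t^2)^{\frac{n-3}{2}}g(t)$ is integrable on $(-1,1)$ and for all $k\geq 0$, \[ a^{n+2}_k[g']=2\pi\, a^n_{k+1}[g]. \]
   Context: $\omega_m$ is the surface area of $\mathbb{S}^{m-1}$. For $N\ge3$, $k\ge0$, the Legendre polynomial is $P^N_k(t)=(-1)^k\frac{\Gamma(\frac{N-1}{2})}{2^k\Gamma(\frac{N-1}{2}+k)}(1-t^2)^{-\frac{N-3}{2}}\frac{d^k}{dt^k}(1-t^2)^{\frac{N-3}{2}+k}$. For a measurable $h$ on $(-1,1)$ with $(1-t^2)^{\frac{N-3}{2}}h(t)$ integrable, $a^N_k[h]=\omega_{N-1}\int_{-1}^1P^N_k(t)(1-t^2)^{\frac{N-3}{2}}h(t)\,dt$ (the $k$-th multiplier of the zonal function $h(\langle e_N,\cdot\rangle)$ on $\mathbb{S}^{N-1}$). *)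

theory Defs
  imports "HOL-Analysis.Analysis"
begin

text \<open>Surface area of the unit sphere S^(m-1) in R^m.\<close>
definition sphere_area :: "nat \<Rightarrow> real" where
  "sphere_area m = 2 * pi powr (real m / 2) / Gamma (real m / 2)"

text \<open>Legendre polynomial P^N_k via the Rodrigues formula (meaningful for t in (-1,1)).\<close>
definition legendre :: "nat \<Rightarrow> nat \<Rightarrow> real \<Rightarrow> real" where
  "legendre N k t =
     (-1) ^ k * Gamma ((real N - 1) / 2) / (2 ^ k * Gamma ((real N - 1) / 2 + real k))
     * (1 - t\<^sup>2) powr (- ((real N - 3) / 2))
     * (deriv ^^ k) (\<lambda>s. (1 - s\<^sup>2) powr ((real N - 3) / 2 + real k)) t"

definition multiplier :: "nat \<Rightarrow> nat \<Rightarrow> (real \<Rightarrow> real) \<Rightarrow> real" where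
  "multiplier N k h = sphere_area (N - 1) *
     (LINT t : {-1<..<1} | lborel. legendre N k t * (1 - t\<^sup>2) powr ((real N - 3) / 2) * h t)"

end

theory Submission
  imports Defs "HOL-Computational_Algebra.Polynomial"
begin

lemma deriv_form:
  fixes \<beta> :: real
  shows "\<exists>p. \<forall>t\<in>{-1<..<1}. (deriv ^^ j) (\<lambda>s. (1 - s\<^sup>2) powr \<beta>) t = (1 - t\<^sup>2) powr (\<beta> - real j) * poly p t"
proof (induction j)
  case 0
  show ?case by (rule exI[of _ 1]) simp
next
  case (Suc j)
  then obtain p where p: "\<And>t. t\<in>{-1<..<1} \<Longrightarrow> (deriv ^^ j) (\<lambda>s. (1 - s\<^sup>2) powr \<beta>) t = (1 - t\<^sup>2) powr (\<beta> - real j) * poly p t" by blast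
  define \<gamma> where "\<gamma> = \<beta> - real j"
  define q where "q = [:0, -2*\<gamma>:] * p + [:1,0,-1:] * pderiv p"
  have "(deriv ^^ Suc j) (\<lambda>s. (1 - s\<^sup>2) powr \<beta>) t = (1 - t\<^sup>2) powr (\<beta> - real (Suc j)) * poly q t"
    if t: "t\<in>{-1<..<1}" for t
  proof -
    have pos: "1 - t\<^sup>2 > 0" using t by (simp add: abs_square_less_1 abs_less_iff)
    have d: "((\<lambda>s. (1 - s\<^sup>2) powr \<gamma> * poly p s) has_real_derivative
        (\<gamma> * (1 - t\<^sup>2) powr (\<gamma> - 1) * (- (2 * t))) * poly p t + (1 - t\<^sup>2) powr \<gamma> * poly (pderiv p) t) (at t)"
      by (intro derivative_eq_intros refl | use pos in simp)+
    have e: "(\<gamma> * (1 - t\<^sup>2) powr (\<gamma> - 1) * (- (2 * t))) * poly p t + (1 - t\<^sup>2) powr \<gamma> * poly (pderiv p) t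
       = (1 - t\<^sup>2) powr (\<beta> - real (Suc j)) * poly q t"
    proof -
      have E: "(1 - t\<^sup>2) powr \<gamma> = (1 - t\<^sup>2) powr (\<gamma> - 1) * (1 - t\<^sup>2)"
        using pos by (simp add: powr_diff)
      have F: "\<beta> - real (Suc j) = \<gamma> - 1" by (simp add: \<gamma>_def)
      show ?thesis unfolding E F by (simp add: q_def algebra_simps power2_eq_square)
    qed
    have d2: "((deriv ^^ j) (\<lambda>s. (1 - s\<^sup>2) powr \<beta>) has_real_derivative
        (1 - t\<^sup>2) powr (\<beta> - real (Suc j)) * poly q t) (at t)"
      apply (rule has_field_derivative_transform_within_open[of _ _ _ "{-1<..<1}"])
      using d e t p by (auto simp: \<gamma>_def)
    show ?thesis using DERIV_imp_deriv[OF d2] by simp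
  qed
  then show ?case by blast
qed

lemma integral_deriv_at:
  fixes u :: "real \<Rightarrow> real"
  assumes "continuous_on {0..<1} u" "0 < t" "t < 1"
  shows "((\<lambda>x. integral {0..x} u) has_real_derivative u t) (at t)"
proof -
  have "continuous_on {0..(t+1)/2} u" using assms(1) by (rule continuous_on_subset) (use assms in auto)
  from integral_has_vector_derivative[OF this, of t] assms
  have "((\<lambda>x. integral {0..x} u) has_vector_derivative u t) (at t within {0..(t+1)/2})" by auto
  moreover have "at t within {0..(t+1)/2} = at t" using assms by (intro at_within_Icc_at) auto
  ultimately show ?thesis by (simp add: has_real_derivative_iff_has_vector_derivative)
qed

lemma integral_right0:
  fixes u :: "real \<Rightarrow> real"
  assumes "continuous_on {0..<1} u"
  shows "((\<lambda>x. integral {0..x} u) \<longlongrightarrow> 0) (at_right 0)"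
proof -
  have "continuous_on {0..1/2} u" using assms(1) by (rule continuous_on_subset) auto
  from integral_has_vector_derivative[OF this, of 0]
  have "((\<lambda>x. integral {0..x} u) has_vector_derivative u 0) (at 0 within {0..1/2})" by auto
  then have "continuous (at 0 within {0..1/2}) (\<lambda>x. integral {0..x} u)"
    by (rule has_vector_derivative_continuous)
  then have "((\<lambda>x. integral {0..x} u) \<longlongrightarrow> integral {0..0} u) (at 0 within {0..1/2})"
    by (simp add: continuous_within)
  moreover have "at 0 within {0..1/2} = at_right (0::real)" by (intro at_within_Icc_at_right) auto
  ultimately show ?thesis by simp
qed

lemma half_lemma:
  fixes u :: "real \<Rightarrow> real" and \<beta> c :: real
  assumes \<beta>: "\<beta> \<ge> 1" and c: "c \<ge> 0"
    and ucont: "continuous_on {0..<1} u" and unn: "\<And>s. s \<in> {0..<1} \<Longrightarrow> u s \<ge> 0"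
    and wint: "(\<lambda>s. (1 - s) powr \<beta> * u s) integrable_on {0..<1}"
  shows "((\<lambda>t. (1 - t) powr \<beta> * (c + integral {0..t} u)) \<longlongrightarrow> 0) (at_left 1)"
    and "set_integrable lborel {0<..<1} (\<lambda>t. (1 - t) powr (\<beta> - 1) * (c + integral {0..t} u))"
proof -
  have \<beta>pos: "\<beta> > 0" using \<beta> by simp
  define \<Phi> where "\<Phi> t = integral {0..t} u" for t
  define w where "w s = (1 - s) powr \<beta> * u s" for s
  define \<Psi> where "\<Psi> t = integral {0..t} w" for t
  have wcont: "continuous_on {0..<1} w" unfolding w_def
    by (intro continuous_intros ucont) auto
  have wnn: "w s \<ge> 0" if "s \<in> {0..<1}" for s using unn[OF that] by (simp add: w_def)
  have uint: "u integrable_on {a..b}" if "0 \<le> a" "b < 1" for a b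
    using ucont by (intro integrable_continuous_real continuous_on_subset[OF ucont]) (use that in auto)
  have wint': "w integrable_on {a..b}" if "0 \<le> a" "b < 1" for a b
    using wcont by (intro integrable_continuous_real continuous_on_subset[OF wcont]) (use that in auto)
  have \<Psi>mono: "\<Psi> s \<le> \<Psi> t" if "0 \<le> s" "s \<le> t" "t < 1" for s t
    unfolding \<Psi>_def using that by (intro integral_subset_le wint') (auto intro: wnn)
  have \<Psi>bound: "\<Psi> t \<le> integral {0..<1} w" if "0 \<le> t" "t < 1" for t
    unfolding \<Psi>_def using that wint[folded w_def] by (intro integral_subset_le wint') (auto intro: wnn)
  define L where "L = Sup (\<Psi> ` {0..<1})"
  have bdd: "bdd_above (\<Psi> ` {0..<1})" using \<Psi>bound by (intro bdd_aboveI) auto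
  have \<Psi>L: "\<Psi> t \<le> L" if "t \<in> {0..<1}" for t
    unfolding L_def using bdd that by (intro cSup_upper) auto
  have \<Psi>lim: "(\<Psi> \<longlongrightarrow> L) (at_left 1)"
  proof (rule increasing_tendsto)
    show "\<forall>\<^sub>F n in at_left 1. \<Psi> n \<le> L"
      unfolding eventually_at_left_field by (intro exI[of _ 0]) (auto intro: \<Psi>L)
  next
    fix x assume "x < L"
    then obtain t0 where t0: "t0 \<in> {0..<1}" "x < \<Psi> t0"
      unfolding L_def using bdd by (subst (asm) less_cSup_iff) auto
    show "\<forall>\<^sub>F n in at_left 1. x < \<Psi> n"
      unfolding eventually_at_left_field using t0
      by (intro exI[of _ t0]) (auto intro: less_le_trans[OF _ \<Psi>mono])
  qed
  have \<Phi>nn: "\<Phi> t \<ge> 0" if "0 \<le> t" "t < 1" for t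
    unfolding \<Phi>_def using that unn by (intro integral_nonneg uint) auto
  have key: "((\<lambda>t. (1 - t) powr \<beta> * \<Phi> t) \<longlongrightarrow> 0) (at_left 1)"
  proof (rule tendstoI)
    fix \<epsilon> :: real assume \<epsilon>: "\<epsilon> > 0"
    have "L - \<epsilon>/2 < L" using \<epsilon> by simp
    then obtain t0 where t0: "t0 \<in> {0..<1}" "L - \<epsilon>/2 < \<Psi> t0"
      unfolding L_def using bdd by (subst (asm) less_cSup_iff) auto
    have "((\<lambda>t. (1 - t) powr \<beta> * \<Phi> t0) \<longlongrightarrow> 0 * \<Phi> t0) (at_left 1)"
      by (intro tendsto_mult tendsto_zero_powrI tendsto_const)
        (auto intro!: tendsto_eq_intros simp: eventually_at_left_field \<beta>pos intro: exI[of _ 0])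
    then have ev1: "\<forall>\<^sub>F t in at_left 1. (1 - t) powr \<beta> * \<Phi> t0 < \<epsilon>/2"
      using \<epsilon> order_tendstoD(2)[of _ 0 "at_left 1" "\<epsilon>/2"] by simp
    have ev2: "\<forall>\<^sub>F t in at_left 1. t0 < t \<and> t < 1"
      unfolding eventually_at_left_field using t0 by (intro exI[of _ t0]) auto
    show "\<forall>\<^sub>F t in at_left 1. dist ((1 - t) powr \<beta> * \<Phi> t) 0 < \<epsilon>"
      using ev1 ev2
    proof eventually_elim
      case (elim t)
      have t0t: "0 \<le> t0" "t0 \<le> t" "t < 1" using elim t0 by auto
      have "\<Phi> t = \<Phi> t0 + integral {t0..t} u"
        unfolding \<Phi>_def using t0t Henstock_Kurzweil_Integration.integral_combine[where a=0 and c=t0 and b=t and f=u] uint[of 0 t] by auto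
      then have "(1 - t) powr \<beta> * \<Phi> t = (1 - t) powr \<beta> * \<Phi> t0 + integral {t0..t} (\<lambda>s. (1 - t) powr \<beta> * u s)"
        by (simp add: algebra_simps)
      also have "integral {t0..t} (\<lambda>s. (1 - t) powr \<beta> * u s) \<le> integral {t0..t} w"
        unfolding w_def using t0t unn \<beta> uint[of t0 t] wint'[unfolded w_def, of t0 t]
        by (intro integral_le integrable_on_cmult_left mult_right_mono powr_mono2) auto
      also have "integral {t0..t} w = \<Psi> t - \<Psi> t0"
        unfolding \<Psi>_def using t0t Henstock_Kurzweil_Integration.integral_combine[where a=0 and c=t0 and b=t and f=w] wint'[of 0 t] by auto
      also have "\<dots> \<le> L - \<Psi> t0" using \<Psi>L[of t] t0t by auto
      finally have "(1 - t) powr \<beta> * \<Phi> t < \<epsilon>" using elim t0 by auto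
      moreover have "(1 - t) powr \<beta> * \<Phi> t \<ge> 0" using \<Phi>nn[of t] t0t by auto
      ultimately show ?case by simp
    qed
  qed
  have cpart: "((\<lambda>t. (1 - t) powr \<beta> * c) \<longlongrightarrow> 0) (at_left 1)"
    using tendsto_mult[OF tendsto_zero_powrI[where f="\<lambda>t. 1 - t" and F="at_left 1" and g="\<lambda>_. \<beta>" and b=\<beta>] tendsto_const[of c]] \<beta>pos
    using lt_ex[of "1::real"] by (auto intro!: tendsto_eq_intros simp: eventually_at_left_field)
  have lim1: "((\<lambda>t. (1 - t) powr \<beta> * (c + \<Phi> t)) \<longlongrightarrow> 0) (at_left 1)"
    using tendsto_add[OF cpart key] by (simp add: algebra_simps)
  then show "((\<lambda>t. (1 - t) powr \<beta> * (c + integral {0..t} u)) \<longlongrightarrow> 0) (at_left 1)"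
    by (simp add: \<Phi>_def)
  define F where "F t = - ((1 - t) powr \<beta> * (c + \<Phi> t)) / \<beta> + \<Psi> t / \<beta>" for t
  define f where "f t = (1 - t) powr (\<beta> - 1) * (c + \<Phi> t)" for t
  have \<Phi>d: "(\<Phi> has_real_derivative u t) (at t)" if "0 < t" "t < 1" for t
    unfolding \<Phi>_def using integral_deriv_at[OF ucont that] .
  have \<Psi>d: "(\<Psi> has_real_derivative w t) (at t)" if "0 < t" "t < 1" for t
    unfolding \<Psi>_def using integral_deriv_at[OF wcont that] .
  have Fd: "(F has_real_derivative f t) (at t)" if t: "0 < t" "t < 1" for t
  proof -
    have "(F has_real_derivative
       - ((\<beta> * (1 - t) powr (\<beta> - 1) * (- 1)) * (c + \<Phi> t) + (1 - t) powr \<beta> * u t) / \<beta> + w t / \<beta>) (at t)"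
      unfolding F_def using t \<beta>pos \<Phi>d[OF t] \<Psi>d[OF t]
      by (intro derivative_eq_intros refl) auto
    moreover have "- ((\<beta> * (1 - t) powr (\<beta> - 1) * (- 1)) * (c + \<Phi> t) + (1 - t) powr \<beta> * u t) / \<beta> + w t / \<beta> = f t"
      using \<beta> by (simp add: f_def w_def field_simps)
    ultimately show ?thesis by simp
  qed
  have fc: "isCont f t" if t: "0 < t" "t < 1" for t
    unfolding f_def using t DERIV_isCont[OF \<Phi>d[OF t]]
    by (intro continuous_intros) auto
  have A: "(F \<longlongrightarrow> - c / \<beta>) (at_right 0)"
  proof -
    have "(F \<longlongrightarrow> - ((1 - 0) powr \<beta> * (c + 0)) / \<beta> + 0 / \<beta>) (at_right 0)"
      unfolding F_def using integral_right0[OF ucont] integral_right0[OF wcont]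
      unfolding \<Phi>_def[symmetric] \<Psi>_def[symmetric]
      using \<beta>pos by (intro tendsto_intros) auto
    then show ?thesis by simp
  qed
  have B: "(F \<longlongrightarrow> - 0 / \<beta> + L / \<beta>) (at_left 1)"
    unfolding F_def using \<beta>pos by (intro tendsto_intros lim1 \<Psi>lim) auto
  have "set_integrable lborel (einterval (ereal 0) (ereal 1)) f"
    apply (rule interval_integral_FTC_nonneg(1)[where F=F and A="- c / \<beta>" and B="- 0 / \<beta> + L / \<beta>"])
    using Fd fc A B c \<Phi>nn by (auto simp: ereal_tendsto_simps1 f_def)
  then show "set_integrable lborel {0<..<1} (\<lambda>t. (1 - t) powr (\<beta> - 1) * (c + integral {0..t} u))"
    by (simp add: f_def[abs_def] \<Phi>_def[abs_def])
qed

lemma cont_sbm: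
  fixes f :: "real \<Rightarrow> real"
  assumes "S \<in> sets borel" "continuous_on S f"
  shows "set_borel_measurable lborel S f"
  unfolding set_borel_measurable_def using borel_measurable_continuous_on_indicator[OF assms] by simp

lemma set_integrable_poly_mult:
  fixes f :: "real \<Rightarrow> real"
  assumes "set_integrable lborel {-1<..<1} f" "continuous_on {-1<..<1} f"
  shows "set_integrable lborel {-1<..<1} (\<lambda>t. poly p t * f t)"
proof -
  obtain B where B: "B \<ge> 0" "\<And>x. x \<in> {-1..1} \<Longrightarrow> norm (poly p x) \<le> B"
    using continuous_on_compact_bound[OF compact_Icc continuous_on_poly[OF continuous_on_id[of "{-1..1::real}"], of p]] by auto
  show ?thesis
  proof (rule set_integrable_bound[where f="\<lambda>t. B * f t"])
    show "set_integrable lborel {-1<..<1} (\<lambda>t. B * f t)" using assms(1) by simp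
    show "set_borel_measurable lborel {-1<..<1} (\<lambda>t. poly p t * f t)"
      by (intro cont_sbm continuous_intros assms(2)) auto
    show "AE x in lborel. x \<in> {-1<..<1} \<longrightarrow> norm (poly p x * f x) \<le> norm (B * f x)"
      using B by (auto simp: abs_mult intro!: mult_right_mono)
  qed
qed

lemma g_right:
  fixes g g' :: "real \<Rightarrow> real" and \<beta> :: real
  assumes \<beta>: "\<beta> \<ge> 1"
    and gd: "\<And>t. t \<in> {-1<..<1} \<Longrightarrow> (g has_real_derivative g' t) (at t)"
    and g'c: "continuous_on {-1<..<1} g'"
    and gi: "set_integrable lborel {-1<..<1} (\<lambda>t. (1 - t\<^sup>2) powr \<beta> * g' t)"
  shows "set_integrable lborel {0<..<1} (\<lambda>t. (1 - t\<^sup>2) powr (\<beta> - 1) * g t)"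
    and "((\<lambda>t. (1 - t\<^sup>2) powr \<beta> * g t) \<longlongrightarrow> 0) (at_left 1)"
proof -
  define u where "u s = \<bar>g' s\<bar>" for s
  define c where "c = \<bar>g 0\<bar>"
  have ucont: "continuous_on {0..<1} u" unfolding u_def
    by (intro continuous_intros continuous_on_subset[OF g'c]) auto
  have unn: "\<And>s. s \<in> {0..<1} \<Longrightarrow> u s \<ge> 0" by (simp add: u_def)
  have le1: "(1 - s) powr a \<le> (1 - s\<^sup>2) powr a" if "0 \<le> s" "s < 1" "a \<ge> 0" for s a :: real
    using that mult_left_le_one_le[of s s] by (intro powr_mono2) (auto simp: power2_eq_square)
  have wint: "(\<lambda>s. (1 - s) powr \<beta> * u s) integrable_on {0..<1}"
  proof -
    have "set_integrable lborel {0..<1} (\<lambda>s. (1 - s) powr \<beta> * u s)"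
    proof (rule set_integrable_bound[where f="\<lambda>t. (1 - t\<^sup>2) powr \<beta> * g' t"])
      show "set_integrable lborel {0..<1} (\<lambda>t. (1 - t\<^sup>2) powr \<beta> * g' t)"
        by (rule set_integrable_subset[OF gi]) auto
      show "set_borel_measurable lborel {0..<1} (\<lambda>s. (1 - s) powr \<beta> * u s)"
        by (intro cont_sbm continuous_intros ucont) auto
      show "AE x in lborel. x \<in> {0..<1} \<longrightarrow> norm ((1 - x) powr \<beta> * u x) \<le> norm ((1 - x\<^sup>2) powr \<beta> * g' x)"
        using le1 \<beta> by (auto simp: u_def abs_mult intro!: mult_right_mono)
    qed
    then show ?thesis by (rule set_borel_integral_eq_integral(1))
  qed
  note H = half_lemma[OF \<beta> _ ucont unn wint, of c]
  have gbound: "\<bar>g t\<bar> \<le> c + integral {0..t} u" if t: "0 \<le> t" "t < 1" for t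
  proof -
    have "(g' has_integral (g t - g 0)) {0..t}"
    proof (rule fundamental_theorem_of_calculus)
      show "0 \<le> t" using t by simp
      fix x assume "x \<in> {0..t}"
      then have "(g has_real_derivative g' x) (at x)" using t by (intro gd) auto
      then show "(g has_vector_derivative g' x) (at x within {0..t})"
        unfolding has_real_derivative_iff_has_vector_derivative by (rule has_vector_derivative_at_within)
    qed
    then have e: "integral {0..t} g' = g t - g 0" "g' integrable_on {0..t}" by (auto simp: integral_unique has_integral_integrable)
    have "u integrable_on {0..t}" using t
      by (intro integrable_continuous_real continuous_on_subset[OF ucont]) auto
    then have "\<bar>integral {0..t} g'\<bar> \<le> integral {0..t} u"
      using integral_norm_bound_integral[OF e(2), of u] by (auto simp: u_def)
    then show ?thesis using e(1) by (simp add: c_def)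
  qed
  have \<Phi>nn: "integral {0..t} u \<ge> 0" if "0 \<le> t" "t < 1" for t
    using that by (intro integral_nonneg integrable_continuous_real continuous_on_subset[OF ucont]) (auto simp: u_def)
  have split: "(1 - t\<^sup>2) powr a \<le> 2 powr a * (1 - t) powr a" if "0 \<le> t" "t < 1" "a \<ge> 0" for t a :: real
  proof -
    have "(1 - t\<^sup>2) = (1 + t) * (1 - t)" by (simp add: power2_eq_square algebra_simps)
    then have "(1 - t\<^sup>2) powr a = (1 + t) powr a * (1 - t) powr a" using that by (simp add: powr_mult)
    also have "\<dots> \<le> 2 powr a * (1 - t) powr a" using that by (intro mult_right_mono powr_mono2) auto
    finally show ?thesis .
  qed
  show "set_integrable lborel {0<..<1} (\<lambda>t. (1 - t\<^sup>2) powr (\<beta> - 1) * g t)"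
  proof (rule set_integrable_bound[where f="\<lambda>t. 2 powr (\<beta> - 1) * ((1 - t) powr (\<beta> - 1) * (c + integral {0..t} u))"])
    show "set_integrable lborel {0<..<1} (\<lambda>t. 2 powr (\<beta> - 1) * ((1 - t) powr (\<beta> - 1) * (c + integral {0..t} u)))"
      using H(2) c_def by simp
    have "continuous_on {0<..<1} g"
    proof (rule DERIV_continuous_on[where D=g'])
    fix x :: real assume "x \<in> {0<..<1}" then show "(g has_field_derivative g' x) (at x within {0<..<1})" by (intro has_field_derivative_at_within[OF gd]) auto
  qed
    then show "set_borel_measurable lborel {0<..<1} (\<lambda>t. (1 - t\<^sup>2) powr (\<beta> - 1) * g t)"
      by (intro cont_sbm continuous_intros) (auto simp: abs_square_less_1 power2_eq_1_iff)
    show "AE x in lborel. x \<in> {0<..<1} \<longrightarrow> norm ((1 - x\<^sup>2) powr (\<beta> - 1) * g x)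
        \<le> norm (2 powr (\<beta> - 1) * ((1 - x) powr (\<beta> - 1) * (c + integral {0..x} u)))"
    proof (rule AE_I2, rule impI)
      fix x :: real assume x: "x \<in> {0<..<1}"
      have "norm ((1 - x\<^sup>2) powr (\<beta> - 1) * g x) = (1 - x\<^sup>2) powr (\<beta> - 1) * \<bar>g x\<bar>" by (simp add: abs_mult)
      also have "\<dots> \<le> (2 powr (\<beta> - 1) * (1 - x) powr (\<beta> - 1)) * (c + integral {0..x} u)"
        using x \<beta> gbound[of x] split[of x "\<beta> - 1"] by (intro mult_mono) auto
      also have "\<dots> = norm (2 powr (\<beta> - 1) * ((1 - x) powr (\<beta> - 1) * (c + integral {0..x} u)))"
        using \<Phi>nn[of x] x by (simp add: abs_mult c_def)
      finally show "norm ((1 - x\<^sup>2) powr (\<beta> - 1) * g x) \<le> norm (2 powr (\<beta> - 1) * ((1 - x) powr (\<beta> - 1) * (c + integral {0..x} u)))" .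
    qed
  qed
  show "((\<lambda>t. (1 - t\<^sup>2) powr \<beta> * g t) \<longlongrightarrow> 0) (at_left 1)"
  proof (rule Lim_null_comparison)
    show "((\<lambda>t. 2 powr \<beta> * ((1 - t) powr \<beta> * (c + integral {0..t} u))) \<longlongrightarrow> 0) (at_left 1)"
      using tendsto_mult[OF tendsto_const H(1)] c_def by simp
    have ev: "\<forall>\<^sub>F t in at_left 1. 0 < t \<and> t < (1::real)"
      unfolding eventually_at_left_field by (intro exI[of _ 0]) auto
    show "\<forall>\<^sub>F t in at_left 1. norm ((1 - t\<^sup>2) powr \<beta> * g t) \<le> 2 powr \<beta> * ((1 - t) powr \<beta> * (c + integral {0..t} u))"
      using ev
    proof eventually_elim
      case (elim x)
      have "norm ((1 - x\<^sup>2) powr \<beta> * g x) = (1 - x\<^sup>2) powr \<beta> * \<bar>g x\<bar>" by (simp add: abs_mult)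
      also have "\<dots> \<le> (2 powr \<beta> * (1 - x) powr \<beta>) * (c + integral {0..x} u)"
        using elim \<beta> gbound[of x] split[of x "\<beta>"] by (intro mult_mono) auto
      finally show ?case by simp
    qed
  qed
qed

lemma reflect_int:
  fixes f :: "real \<Rightarrow> real"
  assumes "set_integrable lborel {a<..<b} f"
  shows "set_integrable lborel {-b<..<-a} (\<lambda>x. f (- x))"
proof -
  have "integrable lborel (\<lambda>x. indicator {a<..<b} x *\<^sub>R f x)"
    using assms by (simp add: set_integrable_def)
  then have "integrable lborel (\<lambda>x. (\<lambda>x. indicator {a<..<b} x *\<^sub>R f x) (0 + (-1) * x))"
    by (subst lborel_integrable_real_affine_iff) auto
  moreover have "(\<lambda>x. (\<lambda>x. indicator {a<..<b} x *\<^sub>R f x) (0 + (-1) * x)) = (\<lambda>x. indicator {-b<..<-a} x *\<^sub>R f (- x))"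
    by (auto simp: indicator_def fun_eq_iff)
  ultimately show ?thesis by (simp add: set_integrable_def)
qed

lemma g_full:
  fixes g g' :: "real \<Rightarrow> real" and \<beta> :: real
  assumes \<beta>: "\<beta> \<ge> 1"
    and gd: "\<And>t. t \<in> {-1<..<1} \<Longrightarrow> (g has_real_derivative g' t) (at t)"
    and g'c: "continuous_on {-1<..<1} g'"
    and gi: "set_integrable lborel {-1<..<1} (\<lambda>t. (1 - t\<^sup>2) powr \<beta> * g' t)"
  shows "set_integrable lborel {-1<..<1} (\<lambda>t. (1 - t\<^sup>2) powr (\<beta> - 1) * g t)"
    and "((\<lambda>t. (1 - t\<^sup>2) powr \<beta> * g t) \<longlongrightarrow> 0) (at_left 1)"
    and "((\<lambda>t. (1 - t\<^sup>2) powr \<beta> * g t) \<longlongrightarrow> 0) (at_right (-1))"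
proof -
  note R = g_right[OF \<beta> gd g'c gi]
  define g2 where "g2 t = g (- t)" for t
  define g2' where "g2' t = - g' (- t)" for t
  have gd2: "(g2 has_real_derivative g2' t) (at t)" if "t \<in> {-1<..<1}" for t
  proof -
    have "(g has_real_derivative g' (- t)) (at (- t))" using that by (intro gd) auto
    then show ?thesis unfolding g2_def[abs_def] g2'_def using DERIV_mirror by blast
  qed
  have g'c2: "continuous_on {-1<..<1} g2'" unfolding g2'_def
    by (intro continuous_intros continuous_on_compose2[OF g'c]) auto
  have gi2: "set_integrable lborel {-1<..<1} (\<lambda>t. (1 - t\<^sup>2) powr \<beta> * g2' t)"
  proof -
    have "set_integrable lborel {-1<..<1} (\<lambda>x. (1 - (-x)\<^sup>2) powr \<beta> * g' (- x))"
      using reflect_int[OF gi] by simp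
    then have "set_integrable lborel {-1<..<1} (\<lambda>x. -1 * ((1 - (-x)\<^sup>2) powr \<beta> * g' (- x)))"
      by (rule set_integrable_mult_right)
    then show ?thesis by (simp add: g2'_def)
  qed
  note L = g_right[OF \<beta> gd2 g'c2 gi2]
  show "((\<lambda>t. (1 - t\<^sup>2) powr \<beta> * g t) \<longlongrightarrow> 0) (at_left 1)" using R(2) .
  have "((\<lambda>t. (1 - t\<^sup>2) powr \<beta> * g t) \<longlongrightarrow> 0) (filtermap uminus (at_left 1))"
    unfolding filterlim_filtermap using L(2) by (simp add: g2_def)
  then show "((\<lambda>t. (1 - t\<^sup>2) powr \<beta> * g t) \<longlongrightarrow> 0) (at_right (-1))"
    using at_right_minus[of "-1::real"] by simp
  have left: "set_integrable lborel {-1<..<0} (\<lambda>t. (1 - t\<^sup>2) powr (\<beta> - 1) * g t)"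
    using reflect_int[OF L(1)] by (simp add: g2_def)
  have gc: "continuous_on {-1<..<1} g"
  proof (rule DERIV_continuous_on[where D=g'])
    fix x :: real assume "x \<in> {-1<..<1}" then show "(g has_field_derivative g' x) (at x within {-1<..<1})" by (intro has_field_derivative_at_within[OF gd]) auto
  qed
  have mid: "set_integrable lborel {-1/2..1/2} (\<lambda>t. (1 - t\<^sup>2) powr (\<beta> - 1) * g t)"
  proof (rule borel_integrable_atLeastAtMost')
    have "continuous_on {-1<..<1} (\<lambda>t. (1 - t\<^sup>2) powr (\<beta> - 1) * g t)"
      by (intro continuous_intros gc) (auto simp: abs_square_less_1 power2_eq_1_iff)
    then show "continuous_on {-1/2..1/2} (\<lambda>t. (1 - t\<^sup>2) powr (\<beta> - 1) * g t)"
      by (rule continuous_on_subset) auto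
  qed
  have "set_integrable lborel ({-1<..<0} \<union> {-1/2..1/2} \<union> {0<..<1}) (\<lambda>t. (1 - t\<^sup>2) powr (\<beta> - 1) * g t)"
    by (intro set_integrable_Un left mid R(1)) auto
  moreover have "{-1<..<0} \<union> {-1/2..1/2} \<union> {0<..<1} = {-1<..<(1::real)}" by auto
  ultimately show "set_integrable lborel {-1<..<1} (\<lambda>t. (1 - t\<^sup>2) powr (\<beta> - 1) * g t)" by simp
qed

lemma deriv_has:
  fixes \<beta> :: real
  assumes "t \<in> {-1<..<1}"
  shows "((deriv ^^ j) (\<lambda>s. (1 - s\<^sup>2) powr \<beta>) has_real_derivative (deriv ^^ Suc j) (\<lambda>s. (1 - s\<^sup>2) powr \<beta>) t) (at t)"
proof -
  obtain p where p: "\<And>t. t\<in>{-1<..<1} \<Longrightarrow> (deriv ^^ j) (\<lambda>s. (1 - s\<^sup>2) powr \<beta>) t = (1 - t\<^sup>2) powr (\<beta> - real j) * poly p t"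
    using deriv_form by blast
  have pos: "1 - t\<^sup>2 > 0" using assms by (simp add: abs_square_less_1 abs_less_iff)
  obtain D where "((\<lambda>s. (1 - s\<^sup>2) powr (\<beta> - real j) * poly p s) has_real_derivative D) (at t)"
    using pos by (intro that derivative_eq_intros refl) auto
  then have d: "((deriv ^^ j) (\<lambda>s. (1 - s\<^sup>2) powr \<beta>) has_real_derivative D) (at t)"
    by (rule has_field_derivative_transform_within_open[of _ _ _ "{-1<..<1}"]) (use assms p in auto)
  then show ?thesis using DERIV_imp_deriv[OF d] by simp
qed

lemma const_eq:
  fixes n k :: nat and \<beta> :: real
  assumes n: "n \<ge> 3" and \<beta>: "\<beta> = (real n - 1) / 2"
  shows "sphere_area (n + 2 - 1) * ((-1) ^ k * Gamma ((real (n + 2) - 1) / 2) / (2 ^ k * Gamma ((real (n + 2) - 1) / 2 + real k)))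
    = - (2 * pi * (sphere_area (n - 1) * ((-1) ^ (k + 1) * Gamma ((real n - 1) / 2) / (2 ^ (k + 1) * Gamma ((real n - 1) / 2 + real (k + 1))))))"
proof -
  have b1: "\<beta> \<ge> 1" using n \<beta> by simp
  have e1: "n + 2 - 1 = n + 1" by simp
  have e2: "real (n + 1) / 2 = \<beta> + 1" "(real (n + 2) - 1) / 2 = \<beta> + 1" using \<beta> by (auto simp: field_simps)
  have e3: "real (n - 1) / 2 = \<beta>" "(real n - 1) / 2 = \<beta>" using \<beta> n by (auto simp: of_nat_diff)
  have e4: "\<beta> + real (k + 1) = \<beta> + 1 + real k" by simp
  have g1: "Gamma (\<beta> + 1) \<noteq> 0" "Gamma \<beta> \<noteq> 0" "Gamma (\<beta> + 1 + real k) \<noteq> 0"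
    using b1 by (auto intro!: Gamma_real_pos[THEN less_imp_neq, symmetric] simp del: Gamma_eq_zero_iff)
  have pp: "pi powr (\<beta> + 1) = pi * pi powr \<beta>" by (simp add: powr_add)
  show ?thesis unfolding sphere_area_def e1 e2 e3 e4 pp using g1
    by (simp add: field_simps)
qed

theorem lemma5p4:
  fixes n :: nat and g g' :: "real \<Rightarrow> real"
  assumes "n \<ge> 3"
    and "\<And>t. t \<in> {-1<..<1} \<Longrightarrow> (g has_real_derivative g' t) (at t)"
    and "continuous_on {-1<..<1} g'"
    and "set_integrable lborel {-1<..<1} (\<lambda>t. (1 - t\<^sup>2) powr ((real n - 1) / 2) * g' t)"
  shows "set_integrable lborel {-1<..<1} (\<lambda>t. (1 - t\<^sup>2) powr ((real n - 3) / 2) * g t)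
    \<and> (\<forall>k. multiplier (n + 2) k g' = 2 * pi * multiplier n (k + 1) g)"
proof -
  define \<beta> where "\<beta> = (real n - 1) / 2"
  have b1: "\<beta> \<ge> 1" using assms(1) by (simp add: \<beta>_def)
  have gi': "set_integrable lborel {-1<..<1} (\<lambda>t. (1 - t\<^sup>2) powr \<beta> * g' t)"
    using assms(4) by (simp add: \<beta>_def)
  note G = g_full[OF b1 assms(2) assms(3) gi']
  have e4: "(real n - 3) / 2 = \<beta> - 1" by (simp add: \<beta>_def field_simps)
  have P1: "set_integrable lborel {-1<..<1} (\<lambda>t. (1 - t\<^sup>2) powr ((real n - 3) / 2) * g t)"
    using G(1) unfolding e4 .
  have pos: "1 - t\<^sup>2 > 0" if "t \<in> {-1<..<1}" for t :: real
    using that by (simp add: abs_square_less_1 abs_less_iff)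
  have gc: "continuous_on {-1<..<1} g"
  proof (rule DERIV_continuous_on[where D=g'])
    fix x :: real assume "x \<in> {-1<..<1}" then show "(g has_field_derivative g' x) (at x within {-1<..<1})"
      by (intro has_field_derivative_at_within[OF assms(2)]) auto
  qed
  have "multiplier (n + 2) k g' = 2 * pi * multiplier n (k + 1) g" for k
  proof -
    define \<gamma> where "\<gamma> = \<beta> + real k"
    define f0 where "f0 = (\<lambda>s::real. (1 - s\<^sup>2) powr \<gamma>)"
    define A where "A = (deriv ^^ k) f0"
    define A' where "A' = (deriv ^^ Suc k) f0"
    obtain p where p0: "\<forall>t\<in>{-1<..<1}. (deriv ^^ k) f0 t = (1 - t\<^sup>2) powr (\<gamma> - real k) * poly p t"
      using deriv_form unfolding f0_def by blast
    have p: "A t = (1 - t\<^sup>2) powr \<beta> * poly p t" if "t\<in>{-1<..<1}" for t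
      using p0 that by (simp add: A_def \<gamma>_def)
    obtain q where q0: "\<forall>t\<in>{-1<..<1}. (deriv ^^ Suc k) f0 t = (1 - t\<^sup>2) powr (\<gamma> - real (Suc k)) * poly q t"
      using deriv_form unfolding f0_def by blast
    have gk: "\<gamma> - real (Suc k) = \<beta> - 1" by (simp add: \<gamma>_def)
    have q: "A' t = (1 - t\<^sup>2) powr (\<beta> - 1) * poly q t" if "t\<in>{-1<..<1}" for t
      using q0 that unfolding gk by (simp add: A'_def)
    have Ad: "(A has_real_derivative A' t) (at t)" if "t \<in> {-1<..<1}" for t
      unfolding A_def A'_def f0_def using deriv_has[OF that] .
    have A'c: "isCont A' t" if "t \<in> {-1<..<1}" for t
      unfolding A'_def f0_def using DERIV_isCont[OF deriv_has[OF that, of "Suc k"]] .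
    define C1 where "C1 = (-1) ^ k * Gamma ((real (n + 2) - 1) / 2) / (2 ^ k * Gamma ((real (n + 2) - 1) / 2 + real k))"
    define C2 where "C2 = (-1) ^ (k + 1) * Gamma ((real n - 1) / 2) / (2 ^ (k + 1) * Gamma ((real n - 1) / 2 + real (k + 1)))"
    have e1: "(real (n + 2) - 3) / 2 + real k = \<gamma>" by (simp add: \<gamma>_def \<beta>_def field_simps)
    have e2: "(real (n + 2) - 3) / 2 = \<beta>" by (simp add: \<beta>_def field_simps)
    have e3: "(real n - 3) / 2 + real (k + 1) = \<gamma>" by (simp add: \<gamma>_def \<beta>_def field_simps)
    have L1: "legendre (n + 2) k t * (1 - t\<^sup>2) powr ((real (n + 2) - 3) / 2) * g' t = C1 * (A t * g' t)"
      if t: "t \<in> {-1<..<1}" for t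
    proof -
      have "(1 - t\<^sup>2) powr (- \<beta>) * (1 - t\<^sup>2) powr \<beta> = 1"
        using pos[OF t] by (simp add: powr_add[symmetric])
      then show ?thesis
        unfolding legendre_def e2 C1_def
        by (simp add: A_def f0_def \<gamma>_def algebra_simps)
    qed
    have L2: "legendre n (k + 1) t * (1 - t\<^sup>2) powr ((real n - 3) / 2) * g t = C2 * (A' t * g t)"
      if t: "t \<in> {-1<..<1}" for t
    proof -
      have "(1 - t\<^sup>2) powr (- (\<beta> - 1)) * (1 - t\<^sup>2) powr (\<beta> - 1) = 1"
        using pos[OF t] by (simp add: powr_add[symmetric])
      then show ?thesis
        unfolding legendre_def e4 C2_def
        by (simp add: A'_def f0_def \<gamma>_def algebra_simps)
    qed
    have M1: "multiplier (n + 2) k g' = sphere_area (n + 2 - 1) * C1 * (LINT t:{-1<..<1}|lborel. A t * g' t)"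
    proof -
      have "multiplier (n + 2) k g' = sphere_area (n + 2 - 1) * (LINT t:{-1<..<1}|lborel. C1 * (A t * g' t))"
        unfolding multiplier_def
        by (intro arg_cong2[where f="(*)"] refl set_lebesgue_integral_cong; (simp; fail)?) (use L1 in blast)
      then show ?thesis by simp
    qed
    have M2: "multiplier n (k + 1) g = sphere_area (n - 1) * C2 * (LINT t:{-1<..<1}|lborel. A' t * g t)"
    proof -
      have "multiplier n (k + 1) g = sphere_area (n - 1) * (LINT t:{-1<..<1}|lborel. C2 * (A' t * g t))"
        unfolding multiplier_def
        by (intro arg_cong2[where f="(*)"] refl set_lebesgue_integral_cong; (simp; fail)?) (use L2 in blast)
      then show ?thesis by simp
    qed
    have int1: "set_integrable lborel {-1<..<1} (\<lambda>t. A t * g' t)"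
    proof -
      have "set_integrable lborel {-1<..<1} (\<lambda>t. poly p t * ((1 - t\<^sup>2) powr \<beta> * g' t))"
        by (intro set_integrable_poly_mult gi' continuous_intros assms(3)) (auto simp: abs_square_less_1 power2_eq_1_iff)
      then show ?thesis by (rule set_integrable_cong[THEN iffD1, rotated -1]) (auto simp: p)
    qed
    have int2: "set_integrable lborel {-1<..<1} (\<lambda>t. A' t * g t)"
    proof -
      have "set_integrable lborel {-1<..<1} (\<lambda>t. poly q t * ((1 - t\<^sup>2) powr (\<beta> - 1) * g t))"
        by (intro set_integrable_poly_mult G(1) continuous_intros gc) (auto simp: abs_square_less_1 power2_eq_1_iff)
      then show ?thesis by (rule set_integrable_cong[THEN iffD1, rotated -1]) (auto simp: q)
    qed
    have limR: "((\<lambda>t. A t * g t) \<longlongrightarrow> 0) (at_left 1)"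
    proof -
      have "((\<lambda>t. poly p t * ((1 - t\<^sup>2) powr \<beta> * g t)) \<longlongrightarrow> poly p 1 * 0) (at_left 1)"
        by (intro tendsto_intros G(2))
      moreover have "\<forall>\<^sub>F t in at_left 1. poly p t * ((1 - t\<^sup>2) powr \<beta> * g t) = A t * g t"
        unfolding eventually_at_left_field by (intro exI[of _ "-1"]) (auto simp: p)
      ultimately show ?thesis by (simp add: tendsto_cong)
    qed
    have limL: "((\<lambda>t. A t * g t) \<longlongrightarrow> 0) (at_right (-1))"
    proof -
      have "((\<lambda>t. poly p t * ((1 - t\<^sup>2) powr \<beta> * g t)) \<longlongrightarrow> poly p (-1) * 0) (at_right (-1))"
        by (intro tendsto_intros G(3))
      moreover have "\<forall>\<^sub>F t in at_right (-1). poly p t * ((1 - t\<^sup>2) powr \<beta> * g t) = A t * g t"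
        unfolding eventually_at_right_field by (intro exI[of _ "1"]) (auto simp: p)
      ultimately show ?thesis by (simp add: tendsto_cong)
    qed
    have FTC: "(LBINT x=ereal (-1)..ereal 1. A' x * g x + A x * g' x) = 0 - 0"
    proof (rule interval_integral_FTC_integrable[where F="\<lambda>t. A t * g t"])
      show "ereal (-1) < ereal 1" by simp
      fix x assume x: "ereal (-1) < ereal x" "ereal x < ereal 1"
      then have xi: "x \<in> {-1<..<1}" by simp
      have "((\<lambda>t. A t * g t) has_real_derivative A' x * g x + g' x * A x) (at x)"
        by (rule DERIV_mult[OF Ad[OF xi] assms(2)[OF xi]])
      then show "((\<lambda>t. A t * g t) has_vector_derivative A' x * g x + A x * g' x) (at x)"
        by (simp add: has_real_derivative_iff_has_vector_derivative[symmetric] mult.commute)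
      have "isCont A x" using DERIV_isCont[OF Ad[OF xi]] .
      moreover have "isCont g x" using DERIV_isCont[OF assms(2)[OF xi]] .
      moreover have "isCont g' x" using assms(3) xi continuous_on_eq_continuous_at[of "{-1<..<1}" g'] by auto
      ultimately show "isCont (\<lambda>x. A' x * g x + A x * g' x) x"
        using A'c[OF xi] by (intro continuous_intros) auto
    next
      show "set_integrable lborel (einterval (ereal (-1)) (ereal 1)) (\<lambda>x. A' x * g x + A x * g' x)"
        using set_integral_add(1)[OF int2 int1] by simp
      show "(((\<lambda>t. A t * g t) \<circ> real_of_ereal) \<longlongrightarrow> 0) (at_right (ereal (-1)))"
        unfolding ereal_tendsto_simps1 by (rule limL)
      show "(((\<lambda>t. A t * g t) \<circ> real_of_ereal) \<longlongrightarrow> 0) (at_left (ereal 1))"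
        unfolding ereal_tendsto_simps1 by (rule limR)
    qed
    have "(LINT x:{-1<..<1}|lborel. A' x * g x + A x * g' x) = 0"
      using FTC unfolding interval_lebesgue_integral_def by simp
    then have I: "(LINT t:{-1<..<1}|lborel. A t * g' t) = - (LINT t:{-1<..<1}|lborel. A' t * g t)"
      using set_integral_add(2)[OF int2 int1] by simp
    show ?thesis
      unfolding M1 M2 I using const_eq[OF assms(1) \<beta>_def, of k] unfolding C1_def[symmetric] C2_def[symmetric]
      by (simp add: algebra_simps)
  qed
  then show ?thesis using P1 by blast
qed

end
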